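(* Let $G_a=(V,E_a)$ with $E_a\subseteq E$ a set of directed links without self-loops, let $D_a^+$ be its maximum out-degree, and let $\Delta\ge1$ be an integer. For an integer $B\ge1$ and directed graphs $G^{(t)}=(V,E^{(t)})$, $t=0,\dots,B-1$, with $\bigcup_{t=0}^{B-1}E^{(t)}=E_a$, define $$F(B):=\Big(\sum_{t=0}^{B-1}\tau(G^{(t)})\Big)\Delta^2B\left(\Big\lceil\frac{D_a^+}{B}\Big\rceil+1\right)^{4\Delta B}.$$ Then $$F(B)\ge F(1)=\tau(G_a)\,\Delta^2(1+D_a^+)^{4\Delta}.$$
   Context: $G=(V,E)$ is a bidirected directed base topology on $V=\{1,\dots,n\}$. Communication model: two distinct directed links $(i,j),(k,l)$ (with $i\ne j$, $k\ne l$) can be scheduled in the same transmission slot iff (a) $i\ne l$ and $j\ne k$ (half-duplex), and (b) if $i\ne k$ then $(i,l)\notin E$ and $(k,j)\notin E$ (interference); otherwise they conflict. For a set $E'$ of activated links, its conflict graph is the undirected graph with vertex set $E'$ and an edge between every conflicting pair. For $H=(V,E')$, $\tau(H)$ denotes the chromatic number of the conflict graph of $E'$ (the minimum number of collision-free transmission slots needed to schedule all links of $E'$; $\tau=0$ if $E'=\emptyset$). The maximum out-degree $D_a^+$ is $\max_j|\{i:(j,i)\in E_a\}|$. *)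

theory Defs
  imports Complex_Main
begin

text \<open>Base topology E: a set of directed links on V = {1..n}.
  Two distinct links conflict unless they satisfy half-duplex and interference conditions.\<close>

definition conflict :: "(nat \<times> nat) set \<Rightarrow> nat \<times> nat \<Rightarrow> nat \<times> nat \<Rightarrow> bool" where
  "conflict E e1 e2 \<longleftrightarrow> e1 \<noteq> e2 \<and>
     \<not> (let (i, j) = e1; (k, l) = e2 in
          (i \<noteq> l \<and> j \<noteq> k) \<and>
          (i \<noteq> k \<longrightarrow> (i, l) \<notin> E \<and> (k, j) \<notin> E))"

definition proper_colouring :: "(nat \<times> nat) set \<Rightarrow> (nat \<times> nat) set \<Rightarrow> nat \<Rightarrow> (nat \<times> nat \<Rightarrow> nat) \<Rightarrow> bool" where
  "proper_colouring E E' k c \<longleftrightarrow>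
     (\<forall>e\<in>E'. c e < k) \<and> (\<forall>e1\<in>E'. \<forall>e2\<in>E'. conflict E e1 e2 \<longrightarrow> c e1 \<noteq> c e2)"

definition tau :: "(nat \<times> nat) set \<Rightarrow> (nat \<times> nat) set \<Rightarrow> nat" where
  "tau E E' = (LEAST k. \<exists>c. proper_colouring E E' k c)"

definition max_outdeg :: "nat set \<Rightarrow> (nat \<times> nat) set \<Rightarrow> nat" where
  "max_outdeg V Ea = Max ((\<lambda>j. card {i. (j, i) \<in> Ea}) ` V)"

definition Fval :: "(nat \<times> nat) set \<Rightarrow> nat \<Rightarrow> nat \<Rightarrow> nat \<Rightarrow> (nat \<Rightarrow> (nat \<times> nat) set) \<Rightarrow> real" where
  "Fval E Delta D B Et =
     (\<Sum>t<B. real (tau E (Et t))) * real Delta ^ 2 * real B *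
     (real_of_int \<lceil>real D / real B\<rceil> + 1) ^ (4 * Delta * B)"

end

theory Submission
  imports Defs
begin

lemma enc_inj: fixes i j k l m :: nat
  assumes "j < m" "l < m" "i*m+j = k*m+l" shows "i=k \<and> j=l"
proof -
  have a: "(i*m+j) div m = i" "(i*m+j) mod m = j" using assms(1) by simp_all
  have b: "(k*m+l) div m = k" "(k*m+l) mod m = l" using assms(2) by simp_all
  show ?thesis using a b assms(3) by metis
qed

lemma colouring_exists:
  assumes "S \<subseteq> {1..n} \<times> {1..(n::nat)}"
  shows "\<exists>k c. proper_colouring E S k c"
proof -
  let ?c = "\<lambda>(i::nat, j::nat). i * (n+1) + j"
  have "proper_colouring E S ((n+1)*(n+1)) ?c"
    unfolding proper_colouring_def
  proof (intro conjI ballI impI)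
    fix e assume "e \<in> S"
    then obtain i j where e: "e = (i,j)" "i \<le> n" "j \<le> n" using assms by force
    have "i * (n+1) + j < i*(n+1) + (n+1)" using e by simp
    also have "\<dots> \<le> n*(n+1) + (n+1)" using e by (intro add_le_mono mult_le_mono1) auto
    finally show "?c e < (n+1)*(n+1)" using e by (simp add: algebra_simps)
  next
    fix e1 e2 assume "e1 \<in> S" "e2 \<in> S" "conflict E e1 e2"
    then obtain i j k l where e: "e1 = (i,j)" "e2 = (k,l)" "j \<le> n" "l \<le> n" "e1 \<noteq> e2"
      using assms unfolding conflict_def by force
    show "?c e1 \<noteq> ?c e2"
    proof
      assume h: "?c e1 = ?c e2"
      have "j < n+1" "l < n+1" using e by simp_all
      hence "i = k \<and> j = l" using enc_inj[of j "n+1" l i k] h e(1,2) by simp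
      thus False using e by simp
    qed
  qed
  thus ?thesis by blast
qed

lemma tau_prop:
  assumes "\<exists>k c. proper_colouring E S k c"
  shows "\<exists>c. proper_colouring E S (tau E S) c"
proof -
  from assms obtain k c where "proper_colouring E S k c" by blast
  hence "\<exists>c. proper_colouring E S (LEAST k. \<exists>c. proper_colouring E S k c) c"
    by (rule LeastI[where P="\<lambda>k. \<exists>c. proper_colouring E S k c", OF exI])
  thus ?thesis unfolding tau_def .
qed

lemma tau_le:
  assumes "proper_colouring E S k c"
  shows "tau E S \<le> k"
  using assms unfolding tau_def by (metis (mono_tags, lifting) Least_le)

lemma tau_subadd:
  fixes B :: nat and Et :: "nat \<Rightarrow> (nat \<times> nat) set"
  assumes sub: "\<And>t. t < B \<Longrightarrow> Et t \<subseteq> {1..n} \<times> {1..(n::nat)}"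
  shows "tau E (\<Union>t<B. Et t) \<le> (\<Sum>t<B. tau E (Et t))"
proof -
  define k where "k t = tau E (Et t)" for t
  have "\<forall>t. \<exists>c. t < B \<longrightarrow> proper_colouring E (Et t) (k t) c"
  proof
    fix t
    show "\<exists>c. t < B \<longrightarrow> proper_colouring E (Et t) (k t) c"
    proof (cases "t < B")
      case True
      from tau_prop[OF colouring_exists[OF sub[OF True]]] show ?thesis unfolding k_def by blast
    qed simp
  qed
  then obtain c where "\<forall>t. t < B \<longrightarrow> proper_colouring E (Et t) (k t) (c t)"
    by (rule choice_iff[THEN iffD1, THEN exE])
  hence c: "\<And>t. t < B \<Longrightarrow> proper_colouring E (Et t) (k t) (c t)" by blast
  define off where "off t = (\<Sum>s<t. k s)" for t
  have omono: "off a \<le> off b" if "a \<le> b" for a b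
    unfolding off_def by (rule sum_mono2) (use that in auto)
  have osuc: "off (Suc t) = off t + k t" for t unfolding off_def by simp
  define tt where "tt e = (LEAST t. t < B \<and> e \<in> Et t)" for e
  define col where "col e = off (tt e) + c (tt e) e" for e
  have tt: "tt e < B" "e \<in> Et (tt e)" "\<And>s. s < B \<Longrightarrow> e \<in> Et s \<Longrightarrow> tt e \<le> s"
    if "e \<in> (\<Union>t<B. Et t)" for e
  proof -
    from that obtain t where "t < B" "e \<in> Et t" by blast
    thus "tt e < B" "e \<in> Et (tt e)" unfolding tt_def by (metis (mono_tags, lifting) LeastI)+
    show "\<And>s. s < B \<Longrightarrow> e \<in> Et s \<Longrightarrow> tt e \<le> s" unfolding tt_def by (simp add: Least_le)
  qed
  have bnd: "off (tt e) \<le> col e \<and> col e < off (Suc (tt e))" if "e \<in> (\<Union>t<B. Et t)" for e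
    using c[OF tt(1)[OF that]] tt(2)[OF that] unfolding col_def osuc proper_colouring_def by auto
  have "proper_colouring E (\<Union>t<B. Et t) (off B) col"
    unfolding proper_colouring_def
  proof (intro conjI ballI impI)
    fix e assume e: "e \<in> (\<Union>t<B. Et t)"
    have "col e < off (Suc (tt e))" using bnd[OF e] by simp
    also have "\<dots> \<le> off B" using tt(1)[OF e] omono by simp
    finally show "col e < off B" .
  next
    fix e1 e2 assume e1: "e1 \<in> (\<Union>t<B. Et t)" and e2: "e2 \<in> (\<Union>t<B. Et t)"
      and cf: "conflict E e1 e2"
    consider "tt e1 = tt e2" | "tt e1 < tt e2" | "tt e2 < tt e1" by linarith
    thus "col e1 \<noteq> col e2"
    proof cases
      case 1
      have "c (tt e1) e1 \<noteq> c (tt e1) e2"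
        using c[OF tt(1)[OF e1]] tt(2)[OF e1] tt(2)[OF e2] 1 cf
        unfolding proper_colouring_def by metis
      thus ?thesis unfolding col_def 1 by simp
    next
      case 2
      have "col e1 < off (Suc (tt e1))" using bnd[OF e1] by simp
      also have "\<dots> \<le> off (tt e2)" using 2 omono by simp
      also have "\<dots> \<le> col e2" using bnd[OF e2] by simp
      finally show ?thesis by simp
    next
      case 3
      have "col e2 < off (Suc (tt e2))" using bnd[OF e2] by simp
      also have "\<dots> \<le> off (tt e1)" using 3 omono by simp
      also have "\<dots> \<le> col e1" using bnd[OF e1] by simp
      finally show ?thesis by simp
    qed
  qed
  hence "tau E (\<Union>t<B. Et t) \<le> off B" by (rule tau_le)
  thus ?thesis unfolding off_def k_def .
qed

lemma factor_ineq:
  fixes D B Delta :: nat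
  assumes "B \<ge> 1"
  shows "(1 + real D) ^ (4 * Delta) \<le> real B * (real_of_int \<lceil>real D / real B\<rceil> + 1) ^ (4 * Delta * B)"
proof -
  define x where "x = real_of_int \<lceil>real D / real B\<rceil>"
  have "real D / real B \<le> x" unfolding x_def by simp
  hence xD: "real D \<le> real B * x" using assms by (simp add: field_simps)
  have "0 \<le> real D / real B" by simp
  hence x0: "x \<ge> 0" unfolding x_def by linarith
  have "1 + real B * x \<le> (1 + x) ^ B" proof -
    have "-1 \<le> x" using x0 by simp
    from Bernoulli_inequality[OF this, of B] show ?thesis by (simp add: add.commute)
  qed
  hence h: "1 + real D \<le> (x + 1) ^ B" using xD by (simp add: add.commute)
  have "(1 + real D) ^ (4 * Delta) \<le> ((x + 1) ^ B) ^ (4 * Delta)"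
    by (rule power_mono[OF h]) simp
  also have "\<dots> = (x+1) ^ (4 * Delta * B)" by (simp add: power_mult[symmetric] mult.commute)
  also have "\<dots> \<le> real B * (x+1) ^ (4 * Delta * B)" using assms x0
    by (simp add: mult_le_cancel_right1)
  finally show ?thesis unfolding x_def .
qed

theorem lemma3:
  fixes n :: nat and E Ea :: "(nat \<times> nat) set" and Delta B :: nat
    and Et :: "nat \<Rightarrow> (nat \<times> nat) set"
  assumes E_on_V: "E \<subseteq> {1..n} \<times> {1..n}"
    and E_bidirected: "\<forall>i j. (i, j) \<in> E \<longrightarrow> (j, i) \<in> E"
    and Ea_sub: "Ea \<subseteq> E"
    and Ea_noloop: "\<forall>i. (i, i) \<notin> Ea"
    and Delta_ge: "Delta \<ge> 1"
    and B_ge: "B \<ge> 1"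
    and union: "(\<Union>t<B. Et t) = Ea"
  shows "Fval E Delta (max_outdeg {1..n} Ea) B Et \<ge> Fval E Delta (max_outdeg {1..n} Ea) 1 (\<lambda>_. Ea)
    \<and> Fval E Delta (max_outdeg {1..n} Ea) 1 (\<lambda>_. Ea)
        = real (tau E Ea) * real Delta ^ 2 * (1 + real (max_outdeg {1..n} Ea)) ^ (4 * Delta)"
proof -
  define D where "D = max_outdeg {1..n} Ea"
  have eq: "Fval E Delta D 1 (\<lambda>_. Ea) = real (tau E Ea) * real Delta ^ 2 * (1 + real D) ^ (4 * Delta)"
    unfolding Fval_def by (simp add: add.commute)
  have sub: "\<And>t. t < B \<Longrightarrow> Et t \<subseteq> {1..n} \<times> {1..n}" using union Ea_sub E_on_V by blast
  have ts: "real (tau E Ea) \<le> (\<Sum>t<B. real (tau E (Et t)))"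
    using tau_subadd[where E=E and Et=Et and B=B, OF sub] union by (simp flip: of_nat_sum)
  have fi: "real Delta ^ 2 * (1 + real D) ^ (4 * Delta) \<le>
      real Delta ^ 2 * (real B * (real_of_int \<lceil>real D / real B\<rceil> + 1) ^ (4 * Delta * B))"
    using factor_ineq[OF B_ge] by (intro mult_left_mono) auto
  have "real (tau E Ea) * (real Delta ^ 2 * (1 + real D) ^ (4 * Delta)) \<le>
      (\<Sum>t<B. real (tau E (Et t))) * (real Delta ^ 2 * (real B * (real_of_int \<lceil>real D / real B\<rceil> + 1) ^ (4 * Delta * B)))"
    by (rule mult_mono[OF ts fi]) (auto intro: sum_nonneg)
  hence "Fval E Delta D 1 (\<lambda>_. Ea) \<le> Fval E Delta D B Et"
    unfolding eq unfolding Fval_def by (simp add: mult.assoc)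
  thus ?thesis using eq unfolding D_def by simp
qed

end
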